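(* There exists a directed set $\mathcal A$, which is not a cardinal number (with its usual ordinal ordering), with $\operatorname{card}(\mathcal A)=\operatorname{cov}(\mathcal N)$, such that each of the families $\mathcal{NM}_{\mathcal A}$, $\mathcal{NF}_{\mathcal A}$ and $\mathcal{ND}_{\mathcal A}$ is positively $2^{\mathfrak c}$-coneable in the vector space $\left(\mathbb R^{[0,1]}\right)^{\mathcal A}$.
   Context: A directed set is a nonempty set $\mathcal A$ with a reflexive transitive relation $\le$ such that every two elements have an upper bound. A net $(x_A)_{A\in\mathcal A}$ in a topological space converges to $x$ if for every neighbourhood $U$ of $x$ there is $A_0$ with $x_A\in U$ for all $A\ge A_0$. For a bounded net of reals, $\liminf_{A\in\mathcal A}x_A$ is the infimum of the set of its cluster points ($x$ is a cluster point if for every neighbourhood $U$ of $x$ and every $A$ there is $A'\ge A$ with $x_{A'}\in U$). $\left(\mathbb R^{[0,1]}\right)^{\mathcal A}$ is the set of nets $(f_A)_{A\in\mathcal A}$ of functions $[0,1]\to\mathbb R$, a commutative real algebra under indexwise addition, indexwise pointwise multiplication, and scalar multiplication. $\lambda$ is Lebesgue measure, $\mathcal N$ the family of Lebesgue null subsets of $[0,1]$, $\operatorname{cov}(\mathcal N)$ the least cardinality of a subfamily of $\mathcal N$ covering $[0,1]$; $\mathfrak c=2^{\aleph_0}$. $\mathcal{NM}_{\mathcal A}$: nets of Lebesgue measurable $f_A:[0,1]\to\mathbb R$ such that (1) $A\le B$ implies $0\le f_A\le f_B$ a.e., (2) $(f_A)$ converges pointwise a.e. to some integrable $f$, (3)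 $\lim_{A}\int_{[0,1]}f_A\,d\lambda\ne\int_{[0,1]}f\,d\lambda$ (the net of integrals does not converge to $\int f$). $\mathcal{NF}_{\mathcal A}$: nets of Lebesgue measurable $f_A\ge0$ a.e. on $[0,1]$ such that $x\mapsto\liminf_{A}f_A(x)$ is integrable and $\int_{[0,1]}\liminf_A f_A\,d\lambda>\liminf_A\int_{[0,1]}f_A\,d\lambda$. $\mathcal{ND}_{\mathcal A}$: nets of Lebesgue measurable $f_A:[0,1]\to\mathbb R$ such that (1) there is an integrable $g$ with $|f_A|\le g$ a.e. for all $A$, (2) $f_A(x)\to f(x)$ a.e. for some integrable $f$, (3) $\int_{[0,1]}|f_A-f|\,d\lambda$ does not converge to $0$. A subset $S$ of a real vector space is positively $\kappa$-coneable if there is a linearly independent set $B\subset S$ with $\operatorname{card}(B)=\kappa$ such that every finite combination $\sum_{i=1}^n a_ix_i$ with $a_i>0$ and $x_i\in B$ lies in $S$. *)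

theory Defs
  imports "HOL-Analysis.Analysis"
begin

definition directed_set :: "'a set \<Rightarrow> 'a rel \<Rightarrow> bool" where
  "directed_set A r \<longleftrightarrow> A \<noteq> {} \<and> r \<subseteq> A \<times> A \<and> refl_on A r \<and> trans r \<and>
     (\<forall>a\<in>A. \<forall>b\<in>A. \<exists>c\<in>A. (a, c) \<in> r \<and> (b, c) \<in> r)"

definition net_tendsto :: "'a set \<Rightarrow> 'a rel \<Rightarrow> ('a \<Rightarrow> 'b::topological_space) \<Rightarrow> 'b \<Rightarrow> bool" where
  "net_tendsto A r x l \<longleftrightarrow>
     (\<forall>U. open U \<and> l \<in> U \<longrightarrow> (\<exists>a0\<in>A. \<forall>a\<in>A. (a0, a) \<in> r \<longrightarrow> x a \<in> U))"

definition net_cluster :: "'a set \<Rightarrow> 'a rel \<Rightarrow> ('a \<Rightarrow> 'b::topological_space) \<Rightarrow> 'b \<Rightarrow> bool" where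
  "net_cluster A r x c \<longleftrightarrow>
     (\<forall>U. open U \<and> c \<in> U \<longrightarrow> (\<forall>a\<in>A. \<exists>b\<in>A. (a, b) \<in> r \<and> x b \<in> U))"

definition net_liminf :: "'a set \<Rightarrow> 'a rel \<Rightarrow> ('a \<Rightarrow> ereal) \<Rightarrow> ereal" where
  "net_liminf A r x = Inf {c. net_cluster A r x c}"

abbreviation L01 :: "real measure" where
  "L01 \<equiv> lebesgue_on {0..1}"

text \<open>The vector space (R^[0,1])^A, with elements represented canonically as
  functions that vanish outside A (in the index) and outside [0,1] (in the variable).\<close>
definition net_space :: "'a set \<Rightarrow> ('a \<Rightarrow> real \<Rightarrow> real) set" where
  "net_space A = {F. \<forall>a t. (a \<notin> A \<or> t \<notin> {0..1}) \<longrightarrow> F a t = 0}"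

definition net_comb :: "('a \<Rightarrow> real \<Rightarrow> real) set \<Rightarrow> (('a \<Rightarrow> real \<Rightarrow> real) \<Rightarrow> real)
    \<Rightarrow> 'a \<Rightarrow> real \<Rightarrow> real" where
  "net_comb C c = (\<lambda>a t. \<Sum>F\<in>C. c F * F a t)"

definition net_lin_indep :: "('a \<Rightarrow> real \<Rightarrow> real) set \<Rightarrow> bool" where
  "net_lin_indep B \<longleftrightarrow>
     (\<forall>C c. C \<subseteq> B \<and> finite C \<and> net_comb C c = (\<lambda>a t. 0) \<longrightarrow> (\<forall>F\<in>C. c F = 0))"

text \<open>Positively kappa-coneable, kappa given as the cardinality of a set K.\<close>
definition pos_coneable :: "('a \<Rightarrow> real \<Rightarrow> real) set \<Rightarrow> 'k set \<Rightarrow> bool" where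
  "pos_coneable S K \<longleftrightarrow>
     (\<exists>B. B \<subseteq> S \<and> net_lin_indep B \<and> (card_of B, card_of K) \<in> ordIso \<and>
        (\<forall>C c. C \<subseteq> B \<and> finite C \<and> C \<noteq> {} \<and> (\<forall>F\<in>C. c F > 0) \<longrightarrow> net_comb C c \<in> S))"

definition null_cover :: "real set set \<Rightarrow> bool" where
  "null_cover \<F> \<longleftrightarrow> (\<forall>N\<in>\<F>. N \<subseteq> {0..1} \<and> N \<in> null_sets lebesgue) \<and> {0..1} \<subseteq> \<Union>\<F>"

definition card_is_covN :: "'a set \<Rightarrow> bool" where
  "card_is_covN A \<longleftrightarrow> (\<exists>\<F>. null_cover \<F> \<and> (card_of \<F>, card_of A) \<in> ordIso) \<and> (\<forall>\<F>. null_cover \<F> \<longrightarrow> (card_of A, card_of \<F>) \<in> ordLeq)"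

definition measurable_net :: "'a set \<Rightarrow> ('a \<Rightarrow> real \<Rightarrow> real) \<Rightarrow> bool" where
  "measurable_net A F \<longleftrightarrow> (\<forall>a\<in>A. F a \<in> borel_measurable L01)"

definition NM :: "'a set \<Rightarrow> 'a rel \<Rightarrow> ('a \<Rightarrow> real \<Rightarrow> real) set" where
  "NM A r = {F \<in> net_space A. measurable_net A F \<and>
     (\<forall>a\<in>A. \<forall>b\<in>A. (a, b) \<in> r \<longrightarrow> (AE t in L01. 0 \<le> F a t \<and> F a t \<le> F b t)) \<and>
     (\<exists>f. integrable L01 f \<and> (AE t in L01. net_tendsto A r (\<lambda>a. F a t) (f t)) \<and>
        \<not> net_tendsto A r (\<lambda>a. \<integral>\<^sup>+ t. ennreal (F a t) \<partial>L01) (\<integral>\<^sup>+ t. ennreal (f t) \<partial>L01))}"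

definition NF :: "'a set \<Rightarrow> 'a rel \<Rightarrow> ('a \<Rightarrow> real \<Rightarrow> real) set" where
  "NF A r = {F \<in> net_space A. measurable_net A F \<and>
     (\<forall>a\<in>A. AE t in L01. 0 \<le> F a t) \<and>
     (let g = (\<lambda>t. net_liminf A r (\<lambda>a. ereal (F a t))) in
        (AE t in L01. \<bar>g t\<bar> \<noteq> \<infinity>) \<and> integrable L01 (\<lambda>t. real_of_ereal (g t)) \<and>
        ereal (\<integral>t. real_of_ereal (g t) \<partial>L01) >
          net_liminf A r (\<lambda>a. enn2ereal (\<integral>\<^sup>+ t. ennreal (F a t) \<partial>L01)))}"

definition ND :: "'a set \<Rightarrow> 'a rel \<Rightarrow> ('a \<Rightarrow> real \<Rightarrow> real) set" where
  "ND A r = {F \<in> net_space A. measurable_net A F \<and>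
     (\<exists>g. integrable L01 g \<and> (\<forall>a\<in>A. AE t in L01. \<bar>F a t\<bar> \<le> g t)) \<and>
     (\<exists>f. integrable L01 f \<and> (AE t in L01. net_tendsto A r (\<lambda>a. F a t) (f t)) \<and>
        \<not> net_tendsto A r (\<lambda>a. \<integral>t. \<bar>F a t - f t\<bar> \<partial>L01) 0)}"

end

theory Submission
  imports Defs "HOL-Algebra.Free_Abelian_Groups"
begin


lemma net_tendsto_ev:
  assumes "a0 \<in> A" "\<forall>a\<in>A. (a0, a) \<in> r \<longrightarrow> x a = s"
  shows "net_tendsto A r x s"
  using assms unfolding net_tendsto_def by metis

lemma net_not_tendsto_const:
  fixes s l :: "'b::t1_space"
  assumes "a0 \<in> A" "\<forall>a\<in>A. (a,a) \<in> r" "\<forall>a\<in>A. x a = s" "s \<noteq> l"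
  shows "\<not> net_tendsto A r x l"
proof
  assume h: "net_tendsto A r x l"
  obtain U where U: "open U" "l \<in> U" "s \<notin> U" using t1_space assms(4) by metis
  then obtain b0 where "b0 \<in> A" "\<forall>a\<in>A. (b0, a) \<in> r \<longrightarrow> x a \<in> U"
    using h unfolding net_tendsto_def by blast
  then show False using U assms by (metis)
qed

lemma net_liminf_ev:
  assumes D: "directed_set A r" and a0: "a0 \<in> A" and ev: "\<forall>a\<in>A. (a0, a) \<in> r \<longrightarrow> x a = s"
  shows "net_liminf A r x = s"
proof -
  have "{c. net_cluster A r x c} = {s}"
  proof safe
    fix c assume c: "net_cluster A r x c"
    show "c = s"
    proof (rule ccontr)
      assume "c \<noteq> s"
      then obtain U where U: "open U" "c \<in> U" "s \<notin> U" using t1_space by metis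
      then obtain b where "b \<in> A" "(a0, b) \<in> r" "x b \<in> U"
        using c a0 unfolding net_cluster_def by blast
      then show False using ev U by auto
    qed
  next
    show "net_cluster A r x s"
      unfolding net_cluster_def
    proof safe
      fix U a assume "open U" "s \<in> U" "a \<in> A"
      then obtain c where "c \<in> A" "(a, c) \<in> r" "(a0, c) \<in> r"
        using D a0 unfolding directed_set_def by blast
      then show "\<exists>b\<in>A. (a, b) \<in> r \<and> x b \<in> U" using ev \<open>s \<in> U\<close> by auto
    qed
  qed
  then show ?thesis unfolding net_liminf_def by simp
qed

lemma space_L01[simp]: "space L01 = {0..1}" by simp

lemma AE_L01_I: "(\<And>t. t \<in> {0..1::real} \<Longrightarrow> P t) \<Longrightarrow> AE t in L01. P t"
  by (rule AE_I2) simp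

lemma AE_L01_null:
  assumes "N \<in> null_sets lebesgue" "\<And>t. t \<notin> N \<Longrightarrow> P t"
  shows "AE t in L01. P t"
proof -
  have "AE t in lebesgue. t \<notin> N" using assms(1) by (rule AE_not_in)
  then have "AE t in lebesgue. t \<in> {0..1} \<longrightarrow> P t" by (rule AE_mp) (use assms(2) in auto)
  then show ?thesis by (subst AE_restrict_space_iff) auto
qed

lemma meas_null:
  fixes g :: "real \<Rightarrow> real"
  assumes "N \<in> null_sets lebesgue" "\<And>t. g t \<noteq> 0 \<Longrightarrow> t \<in> N"
  shows "g \<in> borel_measurable L01"
proof -
  have "AE t in lebesgue. (\<lambda>_. 0::real) t = g t"
    using AE_not_in[OF assms(1)] by (rule AE_mp) (use assms(2) in force)
  then have "g \<in> borel_measurable lebesgue" by (rule borel_measurable_AE[rotated]) simp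
  then show ?thesis by (rule measurable_restrict_space1)
qed

lemma fin_L01: "finite_measure L01"
  by (rule finite_measure_lebesgue_on) simp

lemma measure_L01: "measure L01 {0..1} = 1"
  by (simp add: measure_restrict_space)

lemma emeasure_L01: "emeasure L01 {0..1} = 1"
  by (simp add: emeasure_restrict_space)

lemma integrable_L01_const: "integrable L01 (\<lambda>t. c::real)"
  using finite_measure.integrable_const[OF fin_L01] by blast

lemma integral_L01_const: "(\<integral>t. (c::real) \<partial>L01) = c"
  using measure_L01 by simp

lemma nn_integral_L01_const: "(\<integral>\<^sup>+t. ennreal c \<partial>L01) = ennreal c"
  using emeasure_L01 by (simp add: nn_integral_const)



lemma good:
  assumes D: "directed_set A r" and G: "G \<in> net_space A"
    and nul: "\<And>a. \<exists>N\<in>null_sets lebesgue. \<forall>t. G a t \<noteq> 0 \<longrightarrow> t \<in> N"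
    and ev: "\<And>t. t \<in> {0..1} \<Longrightarrow> \<exists>a0\<in>A. \<forall>a\<in>A. (a0, a) \<in> r \<longrightarrow> G a t = s"
    and s: "s > 0"
  shows "G \<in> NM A r \<and> G \<in> NF A r \<and> G \<in> ND A r"
proof -
  have ae0: "AE t in L01. G a t = 0" for a
  proof -
    obtain N where N: "N \<in> null_sets lebesgue" "\<forall>t. G a t \<noteq> 0 \<longrightarrow> t \<in> N" using nul[of a] by blast
    show ?thesis by (rule AE_L01_null[OF N(1)]) (use N(2) in blast)
  qed
  have measa: "G a \<in> borel_measurable L01" for a
  proof -
    obtain N where N: "N \<in> null_sets lebesgue" "\<forall>t. G a t \<noteq> 0 \<longrightarrow> t \<in> N" using nul[of a] by blast
    show ?thesis by (rule meas_null[OF N(1)]) (use N(2) in blast)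
  qed
  have meas: "measurable_net A G"
    unfolding measurable_net_def using measa by blast
  have int0: "(\<integral>\<^sup>+t. ennreal (G a t) \<partial>L01) = 0" for a
  proof -
    have "(\<integral>\<^sup>+t. ennreal (G a t) \<partial>L01) = (\<integral>\<^sup>+t. 0 \<partial>L01)"
      by (rule nn_integral_cong_AE) (use ae0[of a] in \<open>rule AE_mp, auto\<close>)
    then show ?thesis by simp
  qed
  have ints: "(\<integral>t. \<bar>G a t - s\<bar> \<partial>L01) = s" for a
  proof -
    have m: "(\<lambda>t. \<bar>G a t - s\<bar>) \<in> borel_measurable L01"
      using measa[of a] by (auto intro!: borel_measurable_abs borel_measurable_diff)
    have "(\<integral>t. \<bar>G a t - s\<bar> \<partial>L01) = (\<integral>t. s \<partial>L01)"
      by (rule integral_cong_AE[OF m]) (use ae0[of a] s in \<open>auto elim: AE_mp\<close>)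
    then show ?thesis using integral_L01_const by simp
  qed
  have conv: "AE t in L01. net_tendsto A r (\<lambda>a. G a t) s"
  proof (rule AE_L01_I)
    fix t :: real assume "t \<in> {0..1}"
    then obtain a0 where "a0 \<in> A" "\<forall>a\<in>A. (a0, a) \<in> r \<longrightarrow> G a t = s" using ev by blast
    then show "net_tendsto A r (\<lambda>a. G a t) s" by (rule net_tendsto_ev)
  qed
  have lim: "AE t in L01. net_liminf A r (\<lambda>a. ereal (G a t)) = ereal s"
  proof (rule AE_L01_I)
    fix t :: real assume "t \<in> {0..1}"
    then obtain a0 where "a0 \<in> A" "\<forall>a\<in>A. (a0, a) \<in> r \<longrightarrow> G a t = s" using ev by blast
    then show "net_liminf A r (\<lambda>a. ereal (G a t)) = ereal s"
      by (intro net_liminf_ev[OF D]) auto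
  qed
  obtain a1 where a1: "a1 \<in> A" using D unfolding directed_set_def by blast
  have rfl: "\<forall>a\<in>A. (a,a) \<in> r" using D unfolding directed_set_def refl_on_def by blast
  have NM: "G \<in> NM A r"
    unfolding NM_def
  proof (intro CollectI conjI G meas ballI impI exI[of _ "\<lambda>t. s"])
    fix a b show "AE t in L01. 0 \<le> G a t \<and> G a t \<le> G b t"
      using ae0[of a] ae0[of b] by eventually_elim auto
  next
    show "integrable L01 (\<lambda>t. s)" by (rule integrable_L01_const)
    show "AE t in L01. net_tendsto A r (\<lambda>a. G a t) s" by (rule conv)
    show "\<not> net_tendsto A r (\<lambda>a. \<integral>\<^sup>+ t. ennreal (G a t) \<partial>L01) (\<integral>\<^sup>+ t. ennreal s \<partial>L01)"
      unfolding nn_integral_L01_const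
      by (rule net_not_tendsto_const[OF a1 rfl]) (use int0 s in auto)
  qed
  have NF: "G \<in> NF A r"
    unfolding NF_def Let_def
  proof (intro CollectI conjI G meas ballI)
    fix a show "AE t in L01. 0 \<le> G a t" using ae0[of a] by eventually_elim auto
  next
    show "AE t in L01. \<bar>net_liminf A r (\<lambda>a. ereal (G a t))\<bar> \<noteq> \<infinity>"
      using lim by eventually_elim auto
    have eq: "\<forall>t\<in>space L01. real_of_ereal (net_liminf A r (\<lambda>a. ereal (G a t))) = s"
    proof
      fix t assume "t \<in> space L01"
      then have "t \<in> {0..1}" by simp
      then obtain a0 where "a0 \<in> A" "\<forall>a\<in>A. (a0, a) \<in> r \<longrightarrow> G a t = s" using ev by blast
      then have "net_liminf A r (\<lambda>a. ereal (G a t)) = ereal s"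
        by (intro net_liminf_ev[OF D]) auto
      then show "real_of_ereal (net_liminf A r (\<lambda>a. ereal (G a t))) = s" by simp
    qed
    show "integrable L01 (\<lambda>t. real_of_ereal (net_liminf A r (\<lambda>a. ereal (G a t))))"
    proof -
      have "integrable L01 (\<lambda>t. real_of_ereal (net_liminf A r (\<lambda>a. ereal (G a t)))) \<longleftrightarrow> integrable L01 (\<lambda>t. s)"
        by (rule Bochner_Integration.integrable_cong[OF refl]) (use eq in auto)
      then show ?thesis using integrable_L01_const by blast
    qed
    have "(\<integral>t. real_of_ereal (net_liminf A r (\<lambda>a. ereal (G a t))) \<partial>L01) = (\<integral>t. s \<partial>L01)"
      by (rule Bochner_Integration.integral_cong[OF refl]) (use eq in auto)
    then have i1: "(\<integral>t. real_of_ereal (net_liminf A r (\<lambda>a. ereal (G a t))) \<partial>L01) = s"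
      using integral_L01_const by simp
    have i2: "net_liminf A r (\<lambda>a. enn2ereal (\<integral>\<^sup>+ t. ennreal (G a t) \<partial>L01)) = 0"
      by (rule net_liminf_ev[OF D a1]) (simp add: int0 zero_ennreal.rep_eq)
    show "net_liminf A r (\<lambda>a. enn2ereal (\<integral>\<^sup>+ t. ennreal (G a t) \<partial>L01))
         < ereal (LINT t|L01. real_of_ereal (net_liminf A r (\<lambda>a. ereal (G a t))))"
      unfolding i1 i2 using s by simp
  qed
  have ND: "G \<in> ND A r"
  proof -
    have 1: "\<exists>g. integrable L01 g \<and> (\<forall>a\<in>A. AE t in L01. \<bar>G a t\<bar> \<le> g t)"
    proof (intro exI[of _ "\<lambda>t. 0"] conjI ballI)
      show "integrable L01 (\<lambda>t. 0::real)" by simp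
      fix a show "AE t in L01. \<bar>G a t\<bar> \<le> 0" using ae0[of a] by eventually_elim auto
    qed
    have 2: "\<not> net_tendsto A r (\<lambda>a. LINT t|L01. \<bar>G a t - s\<bar>) 0"
      by (rule net_not_tendsto_const[OF a1 rfl]) (use ints s in auto)
    have 3: "\<exists>f. integrable L01 f \<and> (AE t in L01. net_tendsto A r (\<lambda>a. G a t) (f t)) \<and>
        \<not> net_tendsto A r (\<lambda>a. \<integral>t. \<bar>G a t - f t\<bar> \<partial>L01) 0"
      using integrable_L01_const conv 2 by blast
    show ?thesis unfolding ND_def using G meas 1 3 by blast
  qed
  show ?thesis using NM NF ND by blast
qed



definition XX :: "(real set \<times> real set) set" where
  "XX = Fpow UNIV \<times> Fpow UNIV"

lemma real_le_01: "|UNIV::real set| \<le>o |{0..1::real}|"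
proof -
  let ?f = "\<lambda>x::real. arctan x / pi + 1/2"
  have "inj ?f"
    by (rule injI) (simp add: divide_cancel_right, metis arctan_less_iff not_less_iff_gr_or_eq)
  moreover have "?f ` UNIV \<subseteq> {0..1}"
  proof (rule image_subsetI)
    fix x :: real
    have "- (pi/2) < arctan x" "arctan x < pi/2" using arctan_bounded by auto
    then show "?f x \<in> {0..1}" by (auto simp: field_simps)
  qed
  ultimately show ?thesis by (subst card_of_ordLeq[symmetric]) blast
qed

lemma XX_le: "|XX| \<le>o |{0..1::real}|"
proof -
  have inf: "infinite (Fpow (UNIV::real set))"
  proof
    assume "finite (Fpow (UNIV::real set))"
    moreover have "(\<lambda>x. {x}) ` (UNIV::real set) \<subseteq> Fpow UNIV" by (auto simp: Fpow_def)
    ultimately have "finite ((\<lambda>x::real. {x}) ` UNIV)" by (rule finite_subset[rotated])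
    then have "finite (UNIV::real set)" by (rule finite_imageD) (auto simp: inj_on_def)
    then show False using infinite_UNIV_char_0 by blast
  qed
  have "|XX| =o |Fpow (UNIV::real set)|" unfolding XX_def using card_of_Times_same_infinite[OF inf] .
  moreover have "|Fpow (UNIV::real set)| =o |UNIV::real set|" by (rule card_of_Fpow_infinite) (rule infinite_UNIV_char_0)
  ultimately have "|XX| =o |UNIV::real set|" by (rule ordIso_transitive)
  then show ?thesis by (rule ordIso_ordLeq_trans[OF _ real_le_01])
qed

definition enc :: "real set \<times> real set \<Rightarrow> real" where
  "enc = (SOME f. inj_on f XX \<and> f ` XX \<subseteq> {0..1})"

lemma enc: "inj_on enc XX" "enc ` XX \<subseteq> {0..1}"
proof -
  have "\<exists>f. inj_on f XX \<and> f ` XX \<subseteq> {0..1::real}" using XX_le[unfolded card_of_ordLeq[symmetric]] by assumption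
  then have "inj_on enc XX \<and> enc ` XX \<subseteq> {0..1}" unfolding enc_def by (rule someI_ex)
  then show "inj_on enc XX" "enc ` XX \<subseteq> {0..1}" by auto
qed

definition ww :: "real set \<Rightarrow> real \<Rightarrow> real" where
  "ww Y t = (if \<exists>D E. finite D \<and> finite E \<and> t = enc (D, E) \<and> Y \<inter> D = E then 1 else 0)"

lemma ww_enc:
  assumes "finite D" "finite E"
  shows "ww Y (enc (D, E)) = (if Y \<inter> D = E then 1 else 0)"
proof -
  have "(\<exists>D' E'. finite D' \<and> finite E' \<and> enc (D, E) = enc (D', E') \<and> Y \<inter> D' = E') \<longleftrightarrow> Y \<inter> D = E"
  proof
    assume "\<exists>D' E'. finite D' \<and> finite E' \<and> enc (D, E) = enc (D', E') \<and> Y \<inter> D' = E'"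
    then obtain D' E' where h: "finite D'" "finite E'" "enc (D, E) = enc (D', E')" "Y \<inter> D' = E'" by blast
    have "(D, E) = (D', E')"
      using inj_onD[OF enc(1) h(3)] assms h(1,2) by (auto simp: XX_def Fpow_def)
    then show "Y \<inter> D = E" using h(4) by simp
  qed (use assms in blast)
  then show ?thesis unfolding ww_def by simp
qed

lemma ww_indep:
  assumes fin: "finite \<Y>" and Y0: "Y0 \<in> \<Y>"
    and z: "\<forall>t\<in>{0..1}. (\<Sum>Y\<in>\<Y>. c Y * ww Y t) = 0"
  shows "c Y0 = 0"
proof -
  define p where "p Y = (SOME x. x \<in> (Y - Y0) \<union> (Y0 - Y))" for Y
  have p: "p Y \<in> (Y - Y0) \<union> (Y0 - Y)" if "Y \<noteq> Y0" for Y
  proof -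
    have "\<exists>x. x \<in> (Y - Y0) \<union> (Y0 - Y)" using that by blast
    then show ?thesis unfolding p_def by (rule someI_ex)
  qed
  define D where "D = p ` (\<Y> - {Y0})"
  define E where "E = Y0 \<inter> D"
  have fD: "finite D" "finite E" using fin by (auto simp: D_def E_def)
  have "(D, E) \<in> XX" using fD by (simp add: XX_def Fpow_def)
  then have t: "enc (D, E) \<in> {0..1}" using enc(2) by blast
  have "(\<Sum>Y\<in>\<Y>. c Y * ww Y (enc (D, E))) = (\<Sum>Y\<in>\<Y>. if Y = Y0 then c Y else 0)"
  proof (rule sum.cong[OF refl])
    fix Y assume Y: "Y \<in> \<Y>"
    show "c Y * ww Y (enc (D, E)) = (if Y = Y0 then c Y else 0)"
    proof (cases "Y = Y0")
      case True then show ?thesis by (simp add: ww_enc fD E_def)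
    next
      case False
      then have "p Y \<in> D" using Y by (auto simp: D_def)
      then have "Y \<inter> D \<noteq> E" using p[OF False] by (auto simp: E_def)
      then show ?thesis using False by (simp add: ww_enc fD)
    qed
  qed
  also have "\<dots> = c Y0" using fin Y0 by simp
  finally show ?thesis using z t by simp
qed



lemma sing_cover: "null_cover ((\<lambda>x. {x}) ` {0..1::real})"
  unfolding null_cover_def by auto

lemma min_cover: "\<exists>\<F>. null_cover \<F> \<and> (\<forall>G. null_cover G \<longrightarrow> |\<F>| \<le>o |G| )"
proof -
  define S where "S = {card_of G |G. null_cover G}"
  have "|(\<lambda>x. {x}) ` {0..1::real}| \<in> S" using sing_cover unfolding S_def by blast
  then obtain z where z: "z \<in> S" "\<forall>y. (y, z) \<in> ordLess \<longrightarrow> y \<notin> S"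
    using wf_ordLess[unfolded wf_eq_minimal] by metis
  then obtain \<F> where F: "null_cover \<F>" "z = |\<F>|" unfolding S_def by blast
  have "|\<F>| \<le>o |G|" if "null_cover G" for G
  proof -
    have "|G| \<in> S" using that unfolding S_def by blast
    then have "\<not> |G| <o |\<F>|" using z(2) F(2) by metis
    then show ?thesis using ordLess_or_ordLeq[OF card_of_Well_order card_of_Well_order] by blast
  qed
  then show ?thesis using F by blast
qed

lemma cover_infinite:
  assumes "null_cover \<F>" shows "infinite \<F>"
proof
  assume fin: "finite \<F>"
  have "\<F> \<subseteq> null_sets lebesgue" using assms unfolding null_cover_def by blast
  then have n: "\<Union>\<F> \<in> null_sets lebesgue" using fin by (rule null_sets.finite_Union[rotated])
  have s: "{0..1::real} \<subseteq> \<Union>\<F>" using assms unfolding null_cover_def by blast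
  have "{0..1::real} \<in> null_sets lebesgue" by (rule null_sets_subset[OF n _ s]) simp
  then have "emeasure lebesgue {0..1::real} = 0" by auto
  then show False by simp
qed

lemma cover_le:
  assumes "null_cover \<F>" "\<forall>G. null_cover G \<longrightarrow> |\<F>| \<le>o |G|"
  shows "|Fpow \<F>| \<le>o |UNIV::real set|"
proof -
  have h1: "|\<F>| \<le>o |(\<lambda>x. {x}) ` {0..1::real}|" using assms(2) sing_cover by blast
  have h2: "|(\<lambda>x. {x}) ` {0..1::real}| \<le>o |{0..1::real}|" by (rule card_of_image)
  have h3: "|{0..1::real}| \<le>o |UNIV::real set|" by (rule card_of_UNIV)
  have h4: "|\<F>| \<le>o |UNIV::real set|" by (rule ordLeq_transitive[OF ordLeq_transitive[OF h1 h2] h3])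
  have h5: "|Fpow \<F>| =o |\<F>|" by (rule card_of_Fpow_infinite) (rule cover_infinite[OF assms(1)])
  show ?thesis by (rule ordIso_ordLeq_trans[OF h5 h4])
qed



theorem mainTheorem1:
  shows "\<exists>(A :: real set) (r :: real rel).
     directed_set A r \<and> \<not> card_order_on A r \<and> card_is_covN A \<and>
     pos_coneable (NM A r) (Pow (UNIV :: real set)) \<and>
     pos_coneable (NF A r) (Pow (UNIV :: real set)) \<and>
     pos_coneable (ND A r) (Pow (UNIV :: real set))"
proof -
  obtain \<F> where cov: "null_cover \<F>" and minc: "\<forall>G. null_cover G \<longrightarrow> |\<F>| \<le>o |G|"
    using min_cover by blast
  have inf: "infinite \<F>" by (rule cover_infinite[OF cov])
  have "|Fpow \<F>| \<le>o |UNIV::real set|" by (rule cover_le[OF cov minc])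
  then have "\<exists>f. inj_on f (Fpow \<F>) \<and> f ` (Fpow \<F>) \<subseteq> (UNIV::real set)"
    using card_of_ordLeq[of "Fpow \<F>" "UNIV::real set"] by simp
  then obtain \<iota> :: "real set set \<Rightarrow> real" where inj: "inj_on \<iota> (Fpow \<F>)"
    by blast
  define A where "A = \<iota> ` Fpow \<F>"
  define \<beta> where "\<beta> = inv_into (Fpow \<F>) \<iota>"
  define r where "r = {(a,b). a \<in> A \<and> b \<in> A \<and> \<beta> a \<subseteq> \<beta> b}"
  have \<beta>A: "\<beta> a \<in> Fpow \<F>" if "a \<in> A" for a
    using that unfolding A_def \<beta>_def by (auto intro: inv_into_into)
  have \<beta>\<iota>: "\<beta> (\<iota> S) = S" if "S \<in> Fpow \<F>" for S
    using that inj unfolding \<beta>_def by simp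
  have \<iota>A: "\<iota> S \<in> A" if "S \<in> Fpow \<F>" for S using that unfolding A_def by simp
  have Fnull: "N \<in> null_sets lebesgue" "N \<subseteq> {0..1}" if "N \<in> \<F>" for N
    using cov that unfolding null_cover_def by auto
  have D: "directed_set A r"
    unfolding directed_set_def
  proof (intro conjI ballI)
    show "A \<noteq> {}" using \<iota>A[of "{}"] by (auto simp: Fpow_def)
    show "r \<subseteq> A \<times> A" unfolding r_def by auto
    show "refl_on A r" unfolding r_def refl_on_def by auto
    show "trans r" unfolding r_def trans_def by auto
    fix a b assume ab: "a \<in> A" "b \<in> A"
    have "\<beta> a \<in> Fpow \<F>" "\<beta> b \<in> Fpow \<F>" using \<beta>A ab by auto
    then have U: "\<beta> a \<union> \<beta> b \<in> Fpow \<F>" by (auto simp: Fpow_def)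
    have c1: "\<iota> (\<beta> a \<union> \<beta> b) \<in> A" by (rule \<iota>A[OF U])
    have c2: "\<beta> (\<iota> (\<beta> a \<union> \<beta> b)) = \<beta> a \<union> \<beta> b" by (rule \<beta>\<iota>[OF U])
    show "\<exists>c\<in>A. (a, c) \<in> r \<and> (b, c) \<in> r"
      by (rule bexI[OF _ c1]) (simp add: r_def ab c1 c2)
  qed
  have two: "\<exists>N N'. N \<in> \<F> \<and> N' \<in> \<F> \<and> N \<noteq> N' \<and> t \<in> N" if tt: "t \<in> {0..1}" for t
  proof -
    have covU: "{0..1::real} \<subseteq> \<Union>\<F>" using cov unfolding null_cover_def by (rule conjunct2)
    obtain N where N: "N \<in> \<F>" "t \<in> N" using covU tt by blast
    have "\<F> - {N} \<noteq> {}"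
    proof
      assume "\<F> - {N} = {}"
      then have "\<F> \<subseteq> {N}" by blast
      then show False using inf finite_subset by blast
    qed
    then show ?thesis using N by blast
  qed
  have notco: "\<not> card_order_on A r"
  proof
    assume "card_order_on A r"
    then have tot: "total_on A r"
      unfolding card_order_on_def well_order_on_def linear_order_on_def by blast
    obtain N1 N2 where N: "N1 \<in> \<F>" "N2 \<in> \<F>" "N1 \<noteq> N2" using two[of 0] by auto
    have F: "{N1} \<in> Fpow \<F>" "{N2} \<in> Fpow \<F>" using N by (auto simp: Fpow_def)
    have "\<iota> {N1} \<noteq> \<iota> {N2}"
    proof
      assume e: "\<iota> {N1} = \<iota> {N2}"
      have "{N1} = {N2}" using \<beta>\<iota>[OF F(1)] \<beta>\<iota>[OF F(2)] e by metis
      then show False using N(3) by simp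
    qed
    then have "(\<iota> {N1}, \<iota> {N2}) \<in> r \<or> (\<iota> {N2}, \<iota> {N1}) \<in> r"
      using tot \<iota>A[OF F(1)] \<iota>A[OF F(2)] unfolding total_on_def by blast
    then show False using \<beta>\<iota>[OF F(1)] \<beta>\<iota>[OF F(2)] N(3) unfolding r_def by auto
  qed
  have covN: "card_is_covN A"
  proof -
    have "bij_betw \<iota> (Fpow \<F>) A" using inj unfolding A_def by (rule inj_on_imp_bij_betw)
    then have "|Fpow \<F>| =o |A|" using card_of_ordIso by blast
    moreover have "|Fpow \<F>| =o |\<F>|" by (rule card_of_Fpow_infinite[OF inf])
    ultimately have i1: "|\<F>| =o |A|" using ordIso_symmetric ordIso_transitive by blast
    then have i2: "|A| =o |\<F>|" using ordIso_symmetric by blast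
    show ?thesis unfolding card_is_covN_def
      using i1 i2 cov minc ordIso_ordLeq_trans by blast
  qed
  define Fn where "Fn Y a t = (if a \<in> A \<and> t \<in> \<Union>(\<beta> a) then 1 + (if card (\<beta> a) = 1 then ww Y t else 0) else 0)"
    for Y a t
  define B where "B = range Fn"
  have FnE: "a \<in> A \<and> t \<in> \<Union>(\<beta> a)" if "Fn Y a t \<noteq> 0" for Y a t
    using that unfolding Fn_def by (auto split: if_splits)
  have Fn_space: "Fn Y \<in> net_space A" for Y
    unfolding net_space_def
  proof (intro CollectI allI impI)
    fix a and t :: real assume h: "a \<notin> A \<or> t \<notin> {0..1}"
    show "Fn Y a t = 0"
    proof (rule ccontr)
      assume "Fn Y a t \<noteq> 0"
      then have aA: "a \<in> A" and "t \<in> \<Union>(\<beta> a)" using FnE by auto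
      then obtain X where X: "X \<in> \<beta> a" "t \<in> X" by blast
      then have "X \<in> \<F>" using \<beta>A[OF aA] by (auto simp: Fpow_def)
      then have "t \<in> {0..1}" using Fnull(2) X(2) by blast
      then show False using h aA by blast
    qed
  qed
  have Fn_ev: "\<exists>a0\<in>A. \<forall>a\<in>A. (a0, a) \<in> r \<longrightarrow> (\<forall>Y. Fn Y a t = 1)" if tt: "t \<in> {0..1}" for t
  proof -
    obtain N N' where N: "N \<in> \<F>" "N' \<in> \<F>" "N \<noteq> N'" "t \<in> N" using two[OF tt] by blast
    have F: "{N, N'} \<in> Fpow \<F>" using N by (auto simp: Fpow_def)
    show ?thesis
    proof (intro bexI[OF _ \<iota>A[OF F]] ballI impI allI)
      fix a Y assume a: "a \<in> A" "(\<iota> {N, N'}, a) \<in> r"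
      then have sub: "{N, N'} \<subseteq> \<beta> a" unfolding r_def using \<beta>\<iota>[OF F] by auto
      have fin: "finite (\<beta> a)" using \<beta>A[OF a(1)] by (auto simp: Fpow_def)
      have "card {N, N'} \<le> card (\<beta> a)" by (rule card_mono[OF fin sub])
      then have "card (\<beta> a) \<noteq> 1" using N(3) by auto
      moreover have "t \<in> \<Union>(\<beta> a)" using sub N(4) by auto
      ultimately show "Fn Y a t = 1" using a(1) unfolding Fn_def by simp
    qed
  qed
  have Fn_sing: "\<exists>a. \<forall>Y. Fn Y a t = 1 + ww Y t" if tt: "t \<in> {0..1}" for t
  proof -
    obtain N where N: "N \<in> \<F>" "t \<in> N" using two[OF tt] by blast
    have F: "{N} \<in> Fpow \<F>" using N by (auto simp: Fpow_def)
    show ?thesis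
      by (rule exI[of _ "\<iota> {N}"]) (simp add: Fn_def \<iota>A[OF F] \<beta>\<iota>[OF F] N(2))
  qed
  have indep_aux: "\<forall>Y\<in>\<Y>. c Y = 0"
    if fin: "finite \<Y>" and z: "\<forall>a t. (\<Sum>Y\<in>\<Y>. c Y * Fn Y a t) = 0" for \<Y> c
  proof -
    have "\<forall>t\<in>{0..1}. (\<Sum>Y\<in>\<Y>. c Y * ww Y t) = 0"
    proof
      fix t :: real assume t: "t \<in> {0..1}"
      obtain a0 where a0: "a0 \<in> A" "\<forall>a\<in>A. (a0, a) \<in> r \<longrightarrow> (\<forall>Y. Fn Y a t = 1)"
        using Fn_ev[OF t] by blast
      have "(a0, a0) \<in> r" using a0(1) unfolding r_def by auto
      then have s0: "(\<Sum>Y\<in>\<Y>. c Y) = 0" using z[rule_format, of a0 t] a0 by simp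
      obtain a1 where a1: "\<forall>Y. Fn Y a1 t = 1 + ww Y t" using Fn_sing[OF t] by blast
      have "0 = (\<Sum>Y\<in>\<Y>. c Y * (1 + ww Y t))" using z[rule_format, of a1 t] a1 by simp
      also have "\<dots> = (\<Sum>Y\<in>\<Y>. c Y) + (\<Sum>Y\<in>\<Y>. c Y * ww Y t)"
        by (simp add: distrib_left sum.distrib)
      finally show "(\<Sum>Y\<in>\<Y>. c Y * ww Y t) = 0" using s0 by simp
    qed
    then show ?thesis using ww_indep[OF fin] by blast
  qed
  have injFn: "inj Fn"
  proof (rule injI)
    fix Y1 Y2 assume eq: "Fn Y1 = Fn Y2"
    show "Y1 = Y2"
    proof (rule ccontr)
      assume ne: "Y1 \<noteq> Y2"
      define c where "c Y = (if Y = Y1 then 1 else - 1::real)" for Y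
      have "\<forall>a t. (\<Sum>Y\<in>{Y1, Y2}. c Y * Fn Y a t) = 0" using ne eq by (simp add: c_def)
      then have "\<forall>Y\<in>{Y1, Y2}. c Y = 0" by (intro indep_aux) auto
      then show False by (simp add: c_def)
    qed
  qed
  have reidx: "\<exists>\<Y>. finite \<Y> \<and> C = Fn ` \<Y> \<and> (\<forall>c a t. (\<Sum>F\<in>C. c F * F a t) = (\<Sum>Y\<in>\<Y>. c (Fn Y) * Fn Y a t))"
    if "C \<subseteq> B" "finite C" for C
  proof (intro exI conjI allI)
    show fin: "finite (Fn -` C)" using that(2) injFn by (intro finite_vimageI) auto
    show C: "C = Fn ` (Fn -` C)" using that(1) unfolding B_def by auto
    fix c :: "(real \<Rightarrow> real \<Rightarrow> real) \<Rightarrow> real" and a t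
    show "(\<Sum>F\<in>C. c F * F a t) = (\<Sum>Y\<in>Fn -` C. c (Fn Y) * Fn Y a t)"
      by (subst C, subst sum.reindex) (use injFn in \<open>auto simp: inj_on_def\<close>)
  qed
  have lin: "net_lin_indep B"
    unfolding net_lin_indep_def
  proof (intro allI impI)
    fix C c assume h: "C \<subseteq> B \<and> finite C \<and> net_comb C c = (\<lambda>a t. 0)"
    then have hC: "C \<subseteq> B" "finite C" and hz: "net_comb C c = (\<lambda>a t. 0)" by auto
    obtain \<Y> where Y: "finite \<Y>" "C = Fn ` \<Y>"
      "\<forall>c a t. (\<Sum>F\<in>C. c F * F a t) = (\<Sum>Y\<in>\<Y>. c (Fn Y) * Fn Y a t)"
      using reidx[OF hC] by blast
    have "\<forall>a t. (\<Sum>F\<in>C. c F * F a t) = 0"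
      using hz by (simp add: net_comb_def fun_eq_iff)
    then have "\<forall>a t. (\<Sum>Y\<in>\<Y>. (c \<circ> Fn) Y * Fn Y a t) = 0"
      using Y(3) by simp
    then have "\<forall>Y\<in>\<Y>. (c \<circ> Fn) Y = 0" using indep_aux[OF Y(1)] by blast
    then show "\<forall>F\<in>C. c F = 0" using Y(2) by auto
  qed
  have cardB: "(card_of B, card_of (Pow (UNIV :: real set))) \<in> ordIso"
  proof -
    have "bij_betw Fn UNIV B" unfolding B_def using injFn by (rule inj_on_imp_bij_betw)
    then have "|UNIV :: real set set| =o |B|" using card_of_ordIso by blast
    then show ?thesis using ordIso_symmetric by simp
  qed
  have pos: "net_comb C c \<in> NM A r \<and> net_comb C c \<in> NF A r \<and> net_comb C c \<in> ND A r"
    if C: "C \<subseteq> B" "finite C" "C \<noteq> {}" "\<forall>F\<in>C. c F > 0" for C c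
  proof (rule good[OF D, where s = "\<Sum>F\<in>C. c F"])
    have CF: "\<exists>Y. F = Fn Y" if "F \<in> C" for F using that C(1) unfolding B_def by blast
    have nz: "\<exists>Y. Fn Y a t \<noteq> 0" if nz0: "net_comb C c a t \<noteq> 0" for a t
    proof -
      obtain F where "F \<in> C" "c F * F a t \<noteq> 0"
        using nz0 unfolding net_comb_def by (meson sum.not_neutral_contains_not_neutral)
      then show ?thesis using CF by fastforce
    qed
    show "net_comb C c \<in> net_space A"
      unfolding net_space_def
    proof (intro CollectI allI impI)
      fix a and t :: real assume h: "a \<notin> A \<or> t \<notin> {0..1}"
      have "F a t = 0" if "F \<in> C" for F
        using CF[OF that] Fn_space h unfolding net_space_def by blast
      then show "net_comb C c a t = 0" unfolding net_comb_def by (intro sum.neutral) simp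
    qed
    fix a
    show "\<exists>N\<in>null_sets lebesgue. \<forall>t. net_comb C c a t \<noteq> 0 \<longrightarrow> t \<in> N"
    proof (cases "a \<in> A")
      case True
      have "\<beta> a \<subseteq> null_sets lebesgue" "finite (\<beta> a)" using \<beta>A[OF True] Fnull by (auto simp: Fpow_def)
      then have "\<Union>(\<beta> a) \<in> null_sets lebesgue" by (intro null_sets.finite_Union)
      then show ?thesis using nz FnE by blast
    next
      case False
      then show ?thesis using nz FnE by blast
    qed
  next
    fix t :: real assume t: "t \<in> {0..1}"
    obtain a0 where a0: "a0 \<in> A" "\<forall>a\<in>A. (a0, a) \<in> r \<longrightarrow> (\<forall>Y. Fn Y a t = 1)"
      using Fn_ev[OF t] by blast
    have CF: "\<exists>Y. F = Fn Y" if "F \<in> C" for F using that C(1) unfolding B_def by blast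
    show "\<exists>a0\<in>A. \<forall>a\<in>A. (a0, a) \<in> r \<longrightarrow> net_comb C c a t = (\<Sum>F\<in>C. c F)"
    proof (intro bexI[OF _ a0(1)] ballI impI)
      fix a assume "a \<in> A" "(a0, a) \<in> r"
      then have "F a t = 1" if "F \<in> C" for F using a0 CF[OF that] by blast
      then show "net_comb C c a t = (\<Sum>F\<in>C. c F)" unfolding net_comb_def by (intro sum.cong) simp_all
    qed
  next
    show "0 < (\<Sum>F\<in>C. c F)" using C by (intro sum_pos) auto
  qed
  have "pos_coneable (NM A r) (Pow (UNIV :: real set)) \<and>
     pos_coneable (NF A r) (Pow (UNIV :: real set)) \<and>
     pos_coneable (ND A r) (Pow (UNIV :: real set))"
  proof -
    have BS: "B \<subseteq> NM A r" "B \<subseteq> NF A r" "B \<subseteq> ND A r"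
    proof -
      have "F \<in> NM A r \<and> F \<in> NF A r \<and> F \<in> ND A r" if "F \<in> B" for F
      proof -
        have "net_comb {F} (\<lambda>_. 1) = F" unfolding net_comb_def by simp
        then show ?thesis using pos[of "{F}" "\<lambda>_. 1"] that by simp
      qed
      then show "B \<subseteq> NM A r" "B \<subseteq> NF A r" "B \<subseteq> ND A r" by auto
    qed
    have P1: "pos_coneable (NM A r) (Pow (UNIV :: real set))" unfolding pos_coneable_def
    proof (intro exI[of _ B] conjI allI impI BS(1) lin cardB)
      fix C and c :: "(real \<Rightarrow> real \<Rightarrow> real) \<Rightarrow> real" assume h: "C \<subseteq> B \<and> finite C \<and> C \<noteq> {} \<and> (\<forall>F\<in>C. 0 < c F)"
      show "net_comb C c \<in> NM A r" using pos[of C c] h by blast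
    qed
    have P2: "pos_coneable (NF A r) (Pow (UNIV :: real set))" unfolding pos_coneable_def
    proof (intro exI[of _ B] conjI allI impI BS(2) lin cardB)
      fix C and c :: "(real \<Rightarrow> real \<Rightarrow> real) \<Rightarrow> real" assume h: "C \<subseteq> B \<and> finite C \<and> C \<noteq> {} \<and> (\<forall>F\<in>C. 0 < c F)"
      show "net_comb C c \<in> NF A r" using pos[of C c] h by blast
    qed
    have P3: "pos_coneable (ND A r) (Pow (UNIV :: real set))" unfolding pos_coneable_def
    proof (intro exI[of _ B] conjI allI impI BS(3) lin cardB)
      fix C and c :: "(real \<Rightarrow> real \<Rightarrow> real) \<Rightarrow> real" assume h: "C \<subseteq> B \<and> finite C \<and> C \<noteq> {} \<and> (\<forall>F\<in>C. 0 < c F)"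
      show "net_comb C c \<in> ND A r" using pos[of C c] h by blast
    qed
    show ?thesis using P1 P2 P3 by (intro conjI)
  qed
  then show ?thesis using D notco covN by (intro exI[of _ A] exI[of _ r]) simp
qed

end
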